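(* Let $\mathcal{A}\subset\mathbb{Z}^2$ be finite with $\Delta_{\mathcal{A}}$ a polygon, and let $f\colon\mathcal{A}\to\mathbb{R}^2$ be compatible. Then for every $w\in\mathbb{R}^{\mathcal{A}}_{>}$ and every edge $\delta$ of $\Delta_{\mathcal{A}}$, the restriction of the toric Bézier patch $F_w$ to $\delta$ is injective.
   Context: Let $\mathcal{A}\subset\mathbb{Z}^2$ be finite and write $\Delta_{\mathcal{A}}$ for its convex hull, a lattice polygon. Write it via its edge inequalities as $\Delta_{\mathcal{A}}=\{x\in\mathbb{R}^2 : h_i(x)\ge 0,\ i=1,\dots,\ell\}$. Here there is one $h_i$ for each edge, and $h_i(x,y)=a_ix+b_iy+c_i$ with integers $a_i,b_i,c_i$ and $\gcd(a_i,b_i)=1$. For $\mathbf{a}\in\mathcal{A}$ the toric Bernstein polynomial is $\beta_{\mathbf{a}}(x)=\prod_{i=1}^{\ell} h_i(x)^{h_i(\mathbf{a})}$. Given control points $f\colon\mathcal{A}\to\mathbb{R}^d$ and weights $w=(w_{\mathbf{a}})\in\mathbb{R}^{\mathcal{A}}_{>}$ (all $w_{\mathbf{a}}>0$), the toric Bézier patch is $$F_w(x)=\frac{\sum_{\mathbf{a}\in\mathcal{A}} w_{\mathbf{a}} f(\mathbf{a})\beta_{\mathbf{a}}(x)}{\sum_{\mathbf{a}\in\mathcal{A}} w_{\mathbf{a}}\beta_{\mathbf{a}}(x)},\qquad x\in\Delta_{\mathcal{A}}.$$ An affinely independent triple $p_0,p_1,p_2\in\mathbb{R}^2$ has orientation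 given by the sign of $\det(p_1-p_0,\,p_2-p_0)$. An assignment $f\colon\mathcal{A}\to\mathbb{R}^2$ is weakly compatible if both of the following hold: <ol> <li>There exist affinely independent $\mathbf{a}_0,\mathbf{a}_1,\mathbf{a}_2\in\mathcal{A}$ such that $f(\mathbf{a}_0),f(\mathbf{a}_1),f(\mathbf{a}_2)$ are affinely independent.</li> <li>For any affinely independent $\mathbf{a}'_0,\mathbf{a}'_1,\mathbf{a}'_2\in\mathcal{A}$ with the same orientation as $\mathbf{a}_0,\mathbf{a}_1,\mathbf{a}_2$: if $f(\mathbf{a}'_0),f(\mathbf{a}'_1),f(\mathbf{a}'_2)$ are affinely independent, then they have the same orientation as $f(\mathbf{a}_0),f(\mathbf{a}_1),f(\mathbf{a}_2)$.</li> </ol> The assignment $f$ is compatible if it is weakly compatible and no two distinct vertices of $\Delta_{\mathcal{A}}$ have the same image under $f$. *)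

theory Defs
  imports "HOL-Analysis.Analysis"
begin

definition rp :: "int \<times> int \<Rightarrow> real \<times> real" where
  "rp a = (of_int (fst a), of_int (snd a))"

definition Delta :: "(int \<times> int) set \<Rightarrow> (real \<times> real) set" where
  "Delta A = convex hull (rp ` A)"

definition hval :: "int \<times> int \<times> int \<Rightarrow> real \<times> real \<Rightarrow> real" where
  "hval h x = (case h of (a, b, c) \<Rightarrow> of_int a * fst x + of_int b * snd x + of_int c)"

definition is_edge :: "(real \<times> real) set \<Rightarrow> (real \<times> real) set \<Rightarrow> bool" where
  "is_edge P e \<longleftrightarrow> e face_of P \<and> aff_dim e = 1"

text \<open>The edge inequalities: one primitive integer functional (a,b,c), gcd a b = 1,
  for each edge, nonnegative on the polygon and vanishing on the edge.\<close>
definition edge_ineqs :: "(int \<times> int) set \<Rightarrow> (int \<times> int \<times> int) set" where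
  "edge_ineqs A = {(a, b, c). gcd a b = 1 \<and>
      (\<forall>x\<in>Delta A. hval (a, b, c) x \<ge> 0) \<and>
      (\<exists>e. is_edge (Delta A) e \<and> (\<forall>x\<in>e. hval (a, b, c) x = 0))}"

text \<open>Toric Bernstein polynomial beta_a(x) = prod_i h_i(x)^(h_i(a)); h_i(a) \<ge> 0 for a in A.\<close>
definition bernstein :: "(int \<times> int) set \<Rightarrow> int \<times> int \<Rightarrow> real \<times> real \<Rightarrow> real" where
  "bernstein A a x = (\<Prod>h\<in>edge_ineqs A. hval h x ^ nat \<lfloor>hval h (rp a)\<rfloor>)"

definition toric_patch :: "(int \<times> int) set \<Rightarrow> (int \<times> int \<Rightarrow> real) \<Rightarrow>
    (int \<times> int \<Rightarrow> real \<times> real) \<Rightarrow> real \<times> real \<Rightarrow> real \<times> real" where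
  "toric_patch A w f x =
     (1 / (\<Sum>a\<in>A. w a * bernstein A a x)) *\<^sub>R (\<Sum>a\<in>A. (w a * bernstein A a x) *\<^sub>R f a)"

definition aff_indep3 :: "real \<times> real \<Rightarrow> real \<times> real \<Rightarrow> real \<times> real \<Rightarrow> bool" where
  "aff_indep3 p0 p1 p2 \<longleftrightarrow> distinct [p0, p1, p2] \<and> \<not> affine_dependent {p0, p1, p2}"

definition det2 :: "real \<times> real \<Rightarrow> real \<times> real \<Rightarrow> real" where
  "det2 u v = fst u * snd v - snd u * fst v"

definition orientation :: "real \<times> real \<Rightarrow> real \<times> real \<Rightarrow> real \<times> real \<Rightarrow> real" where
  "orientation p0 p1 p2 = sgn (det2 (p1 - p0) (p2 - p0))"

definition weakly_compatible :: "(int \<times> int) set \<Rightarrow> (int \<times> int \<Rightarrow> real \<times> real) \<Rightarrow> bool" where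
  "weakly_compatible A f \<longleftrightarrow>
    (\<exists>a0\<in>A. \<exists>a1\<in>A. \<exists>a2\<in>A.
       aff_indep3 (rp a0) (rp a1) (rp a2) \<and> aff_indep3 (f a0) (f a1) (f a2) \<and>
       (\<forall>b0\<in>A. \<forall>b1\<in>A. \<forall>b2\<in>A.
          aff_indep3 (rp b0) (rp b1) (rp b2) \<and>
          orientation (rp b0) (rp b1) (rp b2) = orientation (rp a0) (rp a1) (rp a2) \<and>
          aff_indep3 (f b0) (f b1) (f b2) \<longrightarrow>
          orientation (f b0) (f b1) (f b2) = orientation (f a0) (f a1) (f a2)))"

definition compatible :: "(int \<times> int) set \<Rightarrow> (int \<times> int \<Rightarrow> real \<times> real) \<Rightarrow> bool" where
  "compatible A f \<longleftrightarrow> weakly_compatible A f \<and>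
    (\<forall>a\<in>A. \<forall>b\<in>A. rp a extreme_point_of Delta A \<and> rp b extreme_point_of Delta A \<and> a \<noteq> b
       \<longrightarrow> f a \<noteq> f b)"

end

theory Submission
  imports Defs
begin


lemma det2_zero_iff:
  "det2 u v = 0 \<longleftrightarrow> u = 0 \<or> v = 0 \<or> (\<exists>c. v = c *\<^sub>R u)"
proof
  assume h: "det2 u v = 0"
  show "u = 0 \<or> v = 0 \<or> (\<exists>c. v = c *\<^sub>R u)"
  proof (cases "fst u = 0")
    case True
    show ?thesis
    proof (cases "snd u = 0")
      case True with \<open>fst u = 0\<close> show ?thesis by (simp add: prod_eq_iff)
    next
      case False
      have "fst v = 0" using h True False by (simp add: det2_def)
      then have "v = (snd v / snd u) *\<^sub>R u" using True False by (simp add: prod_eq_iff)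
      then show ?thesis by blast
    qed
  next
    case False
    have "snd v = (fst v / fst u) * snd u" using h False by (simp add: det2_def field_simps)
    then have "v = (fst v / fst u) *\<^sub>R u" using False by (simp add: prod_eq_iff)
    then show ?thesis by blast
  qed
next
  assume "u = 0 \<or> v = 0 \<or> (\<exists>c. v = c *\<^sub>R u)"
  then show "det2 u v = 0" by (auto simp: det2_def)
qed

lemma aff_indep3_iff: "aff_indep3 p0 p1 p2 \<longleftrightarrow> det2 (p1 - p0) (p2 - p0) \<noteq> 0"
proof -
  have "aff_indep3 p0 p1 p2 \<longleftrightarrow> \<not> collinear {p1, p0, p2}"
    unfolding aff_indep3_def collinear_3_eq_affine_dependent
    by (auto simp: insert_commute)
  also have "collinear {p1, p0, p2} \<longleftrightarrow> collinear {0, p1 - p0, p2 - p0}"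
    by (rule collinear_3) (simp add: NO_MATCH_def)
  also have "\<dots> \<longleftrightarrow> det2 (p1 - p0) (p2 - p0) = 0"
    unfolding collinear_lemma det2_zero_iff by simp
  finally show ?thesis by simp
qed



lemma det2_sum_left: "det2 (\<Sum>i\<in>S. g i) v = (\<Sum>i\<in>S. det2 (g i) v)"
  by (simp add: det2_def fst_sum snd_sum sum_distrib_right sum_subtractf)

lemma det2_sum_right: "det2 v (\<Sum>i\<in>S. g i) = (\<Sum>i\<in>S. det2 v (g i))"
  by (simp add: det2_def fst_sum snd_sum sum_distrib_left sum_subtractf)

lemma det2_scaleR_left [simp]: "det2 (c *\<^sub>R u) v = c * det2 u v"
  by (simp add: det2_def algebra_simps)

lemma det2_scaleR_right [simp]: "det2 u (c *\<^sub>R v) = c * det2 u v"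
  by (simp add: det2_def algebra_simps)

lemma det2_self [simp]: "det2 u u = 0"
  by (simp add: det2_def)

lemma det2_minus_left: "det2 (- u) v = - det2 u v"
  by (simp add: det2_def)

lemma det2_swap: "det2 v u = - det2 u v"
  by (simp add: det2_def)

lemma det2_diff_right: "det2 u (v - w) = det2 u v - det2 u w"
  by (simp add: det2_def algebra_simps)

lemma det2_diff_left: "det2 (v - w) u = det2 v u - det2 w u"
  by (simp add: det2_def algebra_simps)

lemma det2_cyc: "det2 (b - a) (c - a) = det2 (a - c) (b - c)"
  by (simp add: det2_def algebra_simps)

lemma parallel_ex: "e \<noteq> 0 \<Longrightarrow> det2 e v = 0 \<Longrightarrow> \<exists>k. v = k *\<^sub>R e"
  using det2_zero_iff[of e v] by (metis scale_zero_left)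



lemma core:
  fixes I C :: "'x set" and \<sigma> z :: "'x \<Rightarrow> real" and f :: "'x \<Rightarrow> real \<times> real"
  assumes finI: "finite I"
    and sz: "(\<Sum>a\<in>I. z a) = 0"
    and szf: "(\<Sum>a\<in>I. z a *\<^sub>R f a) = 0"
    and H: "\<And>a b. a \<in> I \<Longrightarrow> b \<in> I \<Longrightarrow> z a < 0 \<Longrightarrow> z b \<ge> 0 \<Longrightarrow> \<sigma> a < \<sigma> b"
    and H': "\<And>a b. a \<in> I \<Longrightarrow> b \<in> I \<Longrightarrow> z a \<le> 0 \<Longrightarrow> z b > 0 \<Longrightarrow> \<sigma> a < \<sigma> b"
    and a0: "a0 \<in> I" "z a0 < 0" and a1: "a1 \<in> I" "z a1 > 0"
    and first: "\<And>a. a \<in> I \<Longrightarrow> a \<noteq> a0 \<Longrightarrow> \<sigma> a0 < \<sigma> a"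
    and last: "\<And>a. a \<in> I \<Longrightarrow> a \<noteq> a1 \<Longrightarrow> \<sigma> a < \<sigma> a1"
    and fne: "f a0 \<noteq> f a1"
    and Ori: "\<And>c. c \<in> C \<Longrightarrow> \<exists>\<epsilon>::real. \<epsilon> \<noteq> 0 \<and>
        (\<forall>a\<in>I. \<forall>b\<in>I. \<sigma> a < \<sigma> b \<longrightarrow> \<epsilon> * det2 (f a - f c) (f b - f c) \<ge> 0)"
    and Cne: "C \<noteq> {}"
    and ND: "\<exists>p\<in>I\<union>C. \<exists>q\<in>I\<union>C. \<exists>r\<in>I\<union>C. det2 (f q - f p) (f r - f p) \<noteq> 0"
  shows False
proof -
  have uz: "(\<Sum>a\<in>I. z a *\<^sub>R (f a - q)) = 0" for q
    by (simp add: scaleR_diff_right sum_subtractf szf scaleR_sum_left[symmetric] sz)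
  have step1: "det2 (f a - f c) (f b - f c) = 0"
    if c: "c \<in> C" and ab: "a \<in> I" "b \<in> I" "z a < 0" "z b > 0" for c a b
  proof -
    obtain \<epsilon> where eps: "\<epsilon> \<noteq> 0" "\<forall>a\<in>I. \<forall>b\<in>I. \<sigma> a < \<sigma> b \<longrightarrow> \<epsilon> * det2 (f a - f c) (f b - f c) \<ge> 0"
      using Ori[OF c] by blast
    define u where "u x = f x - f c" for x
    define zn where "zn x = (if z x < 0 then z x else 0)" for x
    define zp where "zp x = (if z x > 0 then z x else 0)" for x
    have zsplit: "z x = zn x + zp x" for x by (simp add: zn_def zp_def)
    have "(\<Sum>x\<in>I. zn x *\<^sub>R u x) + (\<Sum>x\<in>I. zp x *\<^sub>R u x) = 0"
      using uz[of "f c"] unfolding u_def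
      by (simp add: zsplit scaleR_add_left sum.distrib del: scaleR_diff_right)
    then have mn: "(\<Sum>x\<in>I. zp x *\<^sub>R u x) = - (\<Sum>x\<in>I. zn x *\<^sub>R u x)"
      by (simp add: eq_neg_iff_add_eq_0 add.commute)
    have "det2 (\<Sum>x\<in>I. zn x *\<^sub>R u x) (\<Sum>y\<in>I. zp y *\<^sub>R u y) = 0"
      by (simp add: mn det2_def)
    moreover have "det2 (\<Sum>x\<in>I. zn x *\<^sub>R u x) (\<Sum>y\<in>I. zp y *\<^sub>R u y)
        = (\<Sum>x\<in>I. zn x * det2 (u x) (\<Sum>y\<in>I. zp y *\<^sub>R u y))"
      by (simp add: det2_sum_left)
    moreover have "\<dots> = (\<Sum>x\<in>I. \<Sum>y\<in>I. zn x * (zp y * det2 (u x) (u y)))"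
      by (simp add: det2_sum_right sum_distrib_left)
    ultimately have S0: "(\<Sum>x\<in>I. \<Sum>y\<in>I. zn x * (zp y * det2 (u x) (u y))) = 0"
      by simp
    have nn: "0 \<le> - \<epsilon> * (zn x * (zp y * det2 (u x) (u y)))" if "x \<in> I" "y \<in> I" for x y
    proof (cases "z x < 0 \<and> z y > 0")
      case True
      then have "\<sigma> x < \<sigma> y" using H that by fastforce
      then have "\<epsilon> * det2 (u x) (u y) \<ge> 0" using eps that by (simp add: u_def)
      moreover have "- (zn x * zp y) \<ge> 0" using True
        by (simp add: zn_def zp_def mult_neg_pos less_imp_le)
      ultimately have "0 \<le> (- (zn x * zp y)) * (\<epsilon> * det2 (u x) (u y))"
        by (metis mult_nonneg_nonneg)
      then show ?thesis by (simp add: algebra_simps)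
    next
      case False
      then have "zn x = 0 \<or> zp y = 0" by (auto simp: zn_def zp_def)
      then show ?thesis by auto
    qed
    have S1: "(\<Sum>x\<in>I. (\<Sum>y\<in>I. - \<epsilon> * (zn x * (zp y * det2 (u x) (u y))))) = 0"
    proof -
      have "(\<Sum>x\<in>I. (\<Sum>y\<in>I. - \<epsilon> * (zn x * (zp y * det2 (u x) (u y))))) =
          - \<epsilon> * (\<Sum>x\<in>I. \<Sum>y\<in>I. zn x * (zp y * det2 (u x) (u y)))"
        by (simp only: sum_distrib_left)
      then show ?thesis using S0 by simp
    qed
    have T: "(\<Sum>y\<in>I. - \<epsilon> * (zn a * (zp y * det2 (u a) (u y)))) = 0"
      by (rule sum_nonneg_0[OF finI _ S1 ab(1)]) (rule sum_nonneg, rule nn, assumption+)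
    have "- \<epsilon> * (zn a * (zp b * det2 (u a) (u b))) = 0"
      by (rule sum_nonneg_0[OF finI nn[OF ab(1)] T ab(2)])
    then show ?thesis using eps(1) ab by (simp add: zn_def zp_def u_def)
  qed
  define e where "e = f a1 - f a0"
  have e0: "e \<noteq> 0" using fne by (simp add: e_def)
  define lam where "lam p = det2 e (p - f a0)" for p
  have step2: "lam (f c) = 0" if "c \<in> C" for c
    using step1[OF that a0(1) a1(1) a0(2) a1(2)] det2_cyc[of "f a1" "f a0" "f c"]
    by (simp add: lam_def e_def)
  have onL: "\<exists>k. p = f a0 + k *\<^sub>R e" if lp: "lam p = 0" for p
  proof -
    obtain k where "p - f a0 = k *\<^sub>R e" using parallel_ex[OF e0, of "p - f a0"] lp unfolding lam_def by blast
    then show ?thesis by (metis add.commute diff_add_cancel)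
  qed
  have step3a: "lam (f b) = 0" if c: "c \<in> C" "f c \<noteq> f a0" and b: "b \<in> I" "z b > 0" for c b
  proof -
    obtain k where q: "f c = f a0 + k *\<^sub>R e" using onL step2[OF c(1)] by blast
    have k0: "k \<noteq> 0" using c(2) q by auto
    have "det2 (f a0 - f c) (f b - f c) = 0" using step1[OF c(1) a0(1) b(1) a0(2) b(2)] .
    also have "det2 (f a0 - f c) (f b - f c) = - k * lam (f b)"
      unfolding q lam_def by (simp add: det2_def algebra_simps)
    finally show ?thesis using k0 by simp
  qed
  have step3b: "lam (f a) = 0" if c: "c \<in> C" "f c \<noteq> f a1" and a: "a \<in> I" "z a < 0" for c a
  proof -
    obtain k where q: "f c = f a0 + k *\<^sub>R e" using onL step2[OF c(1)] by blast
    have k1: "k \<noteq> 1" using c(2) q by (auto simp: e_def)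
    have "det2 (f a - f c) (f a1 - f c) = 0" using step1[OF c(1) a(1) a1(1) a(2) a1(2)] .
    also have "f a1 = f a0 + e" by (simp add: e_def)
    also have "det2 (f a - f c) (f a0 + e - f c) = - (1 - k) * lam (f a)"
      unfolding q lam_def by (simp add: det2_def algebra_simps)
    finally show ?thesis using k1 by simp
  qed
  have slam: "(\<Sum>a\<in>I. z a * lam (f a)) = 0"
  proof -
    have "(\<Sum>a\<in>I. z a * lam (f a)) = det2 e (\<Sum>a\<in>I. z a *\<^sub>R (f a - f a0))"
      by (simp add: lam_def det2_sum_right)
    then show ?thesis using uz[of "f a0"] by (simp add: det2_def)
  qed
  obtain c0 where c0: "c0 \<in> C" using Cne by blast
  have step3: "lam (f a) = 0" if a: "a \<in> I" "z a \<noteq> 0" for a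
  proof (cases "(\<exists>c\<in>C. f c \<noteq> f a0) \<and> (\<exists>c\<in>C. f c \<noteq> f a1)")
    case True
    then show ?thesis using step3a step3b a by (meson linorder_neqE_linordered_idom)
  next
    case False
    then consider "\<forall>c\<in>C. f c = f a0" | "\<forall>c\<in>C. f c = f a1" by blast
    then show ?thesis
    proof cases
      case 1
      then have fc: "f c0 = f a0" using c0 by blast
      have Nz: "lam (f x) = 0" if "x \<in> I" "z x < 0" for x
        using step3b[OF c0 _ that] fc fne by simp
      obtain \<epsilon> where eps: "\<epsilon> \<noteq> 0" "\<forall>a\<in>I. \<forall>b\<in>I. \<sigma> a < \<sigma> b \<longrightarrow> \<epsilon> * det2 (f a - f c0) (f b - f c0) \<ge> 0"
        using Ori[OF c0] by blast
      have nn: "0 \<le> - \<epsilon> * z x * lam (f x)" if x: "x \<in> I" for x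
      proof -
        consider "z x < 0" | "z x = 0" | "z x > 0" by linarith
        then show ?thesis
        proof cases
          case 3
          have "\<epsilon> * lam (f x) \<le> 0"
          proof (cases "x = a1")
            case True then show ?thesis by (simp add: lam_def e_def det2_def)
          next
            case False
            then have "\<sigma> x < \<sigma> a1" using last x by blast
            then have "\<epsilon> * det2 (f x - f c0) (f a1 - f c0) \<ge> 0" using eps x a1 by blast
            moreover have "det2 (f x - f c0) (f a1 - f c0) = - lam (f x)"
              by (simp add: fc lam_def e_def det2_def)
            ultimately show ?thesis by simp
          qed
          then have "0 \<le> z x * (- (\<epsilon> * lam (f x)))" using 3
            by (metis mult_nonneg_nonneg less_imp_le neg_0_le_iff_le neg_0_less_iff_less)
          then show ?thesis by (simp add: algebra_simps)
        qed (auto simp: Nz x)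
      qed
      have "(\<Sum>x\<in>I. - \<epsilon> * z x * lam (f x)) = - \<epsilon> * (\<Sum>x\<in>I. z x * lam (f x))"
        by (simp add: sum_distrib_left mult.assoc)
      then have S3: "(\<Sum>x\<in>I. - \<epsilon> * z x * lam (f x)) = 0" using slam by simp
      have "- \<epsilon> * z a * lam (f a) = 0" using sum_nonneg_0[OF finI _ S3 a(1)] nn by blast
      then show ?thesis using eps(1) a by simp
    next
      case 2
      then have fc: "f c0 = f a1" using c0 by blast
      have Pz: "lam (f x) = 0" if "x \<in> I" "z x > 0" for x
        using step3a[OF c0 _ that] fc fne by simp
      obtain \<epsilon> where eps: "\<epsilon> \<noteq> 0" "\<forall>a\<in>I. \<forall>b\<in>I. \<sigma> a < \<sigma> b \<longrightarrow> \<epsilon> * det2 (f a - f c0) (f b - f c0) \<ge> 0"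
        using Ori[OF c0] by blast
      have nn: "0 \<le> \<epsilon> * z x * lam (f x)" if x: "x \<in> I" for x
      proof -
        consider "z x < 0" | "z x = 0" | "z x > 0" by linarith
        then show ?thesis
        proof cases
          case 1
          have "\<epsilon> * lam (f x) \<le> 0"
          proof (cases "x = a0")
            case True then show ?thesis by (simp add: lam_def e_def det2_def)
          next
            case False
            then have "\<sigma> a0 < \<sigma> x" using first x by blast
            then have "\<epsilon> * det2 (f a0 - f c0) (f x - f c0) \<ge> 0" using eps x a0 by blast
            moreover have "det2 (f a0 - f c0) (f x - f c0) = - lam (f x)"
              by (simp add: fc lam_def e_def det2_def algebra_simps)
            ultimately show ?thesis by simp
          qed
          then have "0 \<le> (- z x) * (- (\<epsilon> * lam (f x)))" using 1
            by (metis mult_nonneg_nonneg less_imp_le neg_0_le_iff_le neg_0_less_iff_less)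
          then show ?thesis by (simp add: algebra_simps)
        qed (auto simp: Pz x)
      qed
      have "(\<Sum>x\<in>I. \<epsilon> * z x * lam (f x)) = \<epsilon> * (\<Sum>x\<in>I. z x * lam (f x))"
        by (simp add: sum_distrib_left mult.assoc)
      then have S3: "(\<Sum>x\<in>I. \<epsilon> * z x * lam (f x)) = 0" using slam by simp
      have "\<epsilon> * z a * lam (f a) = 0" using sum_nonneg_0[OF finI _ S3 a(1)] nn by blast
      then show ?thesis using eps(1) a by simp
    qed
  qed
  have collin: "det2 (p - r) (q - r) = 0" if lpqr: "lam p = 0" "lam q = 0" "lam r = 0" for p q r
  proof -
    obtain kp where "p = f a0 + kp *\<^sub>R e" using onL lpqr(1) by blast
    moreover obtain kq where "q = f a0 + kq *\<^sub>R e" using onL lpqr(2) by blast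
    moreover obtain kr where "r = f a0 + kr *\<^sub>R e" using onL lpqr(3) by blast
    ultimately show ?thesis by (simp add: det2_def algebra_simps)
  qed
  obtain az where az: "az \<in> I" "z az = 0" "lam (f az) \<noteq> 0"
  proof -
    obtain p q r where pqr: "p \<in> I\<union>C" "q \<in> I\<union>C" "r \<in> I\<union>C" "det2 (f q - f p) (f r - f p) \<noteq> 0"
      using ND by blast
    have good: "lam (f x) = 0" if "x \<in> I\<union>C" "\<not> (x \<in> I \<and> z x = 0)" for x
      using that step2 step3 by blast
    show ?thesis
    proof (cases "\<exists>x\<in>{p,q,r}. x \<in> I \<and> z x = 0 \<and> lam (f x) \<noteq> 0")
      case True then show ?thesis using that by blast
    next
      case False
      then have "lam (f p) = 0" "lam (f q) = 0" "lam (f r) = 0" using good pqr by auto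
      then have "det2 (f q - f p) (f r - f p) = 0" using collin by blast
      then show ?thesis using pqr by simp
    qed
  qed
  obtain \<epsilon> where eps: "\<epsilon> \<noteq> 0" "\<forall>a\<in>I. \<forall>b\<in>I. \<sigma> a < \<sigma> b \<longrightarrow> \<epsilon> * det2 (f a - f c0) (f b - f c0) \<ge> 0"
    using Ori[OF c0] by blast
  define mu where "mu a = det2 (f a - f c0) (f az - f c0)" for a
  have smu: "(\<Sum>a\<in>I. z a * mu a) = 0"
  proof -
    have "(\<Sum>a\<in>I. z a * mu a) = det2 (\<Sum>a\<in>I. z a *\<^sub>R (f a - f c0)) (f az - f c0)"
      by (simp add: mu_def det2_sum_left)
    then show ?thesis using uz[of "f c0"] by (simp add: det2_def)
  qed
  have nn: "0 \<le> - \<epsilon> * z x * mu x" if x: "x \<in> I" for x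
  proof -
    consider "z x < 0" | "z x = 0" | "z x > 0" by linarith
    then show ?thesis
    proof cases
      case 1
      then have "\<sigma> x < \<sigma> az" using H[OF x az(1)] az(2) by simp
      then have "\<epsilon> * mu x \<ge> 0" using eps x az by (simp add: mu_def)
      then have "0 \<le> (- z x) * (\<epsilon> * mu x)" using 1
        by (metis mult_nonneg_nonneg less_imp_le neg_0_le_iff_le neg_0_less_iff_less)
      then show ?thesis by (simp add: algebra_simps)
    next
      case 3
      then have "\<sigma> az < \<sigma> x" using H'[OF az(1) x] az(2) by simp
      then have "\<epsilon> * det2 (f az - f c0) (f x - f c0) \<ge> 0" using eps x az by blast
      then have "\<epsilon> * mu x \<le> 0" by (simp add: mu_def det2_swap[of "f az - f c0"])
      then have "0 \<le> z x * (- (\<epsilon> * mu x))" using 3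
        by (metis mult_nonneg_nonneg less_imp_le neg_0_le_iff_le neg_0_less_iff_less)
      then show ?thesis by (simp add: algebra_simps)
    qed simp
  qed
  have "(\<Sum>x\<in>I. - \<epsilon> * z x * mu x) = - \<epsilon> * (\<Sum>x\<in>I. z x * mu x)"
    by (simp add: sum_distrib_left mult.assoc)
  then have S: "(\<Sum>x\<in>I. - \<epsilon> * z x * mu x) = 0" using smu by simp
  have "- \<epsilon> * z a0 * mu a0 = 0" using sum_nonneg_0[OF finI _ S a0(1)] nn by blast
  then have m0: "mu a0 = 0" using eps(1) a0 by simp
  have "- \<epsilon> * z a1 * mu a1 = 0" using sum_nonneg_0[OF finI _ S a1(1)] nn by blast
  then have m1: "mu a1 = 0" using eps(1) a1 by simp
  obtain k where q: "f c0 = f a0 + k *\<^sub>R e" using onL step2[OF c0] by blast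
  have "mu a0 = - k * lam (f az)"
    unfolding mu_def q lam_def by (simp add: det2_def algebra_simps)
  moreover have "f a1 = f a0 + e" by (simp add: e_def)
  then have "mu a1 = (1 - k) * lam (f az)"
    unfolding mu_def q lam_def by (simp add: det2_def algebra_simps)
  ultimately show False using m0 m1 az(3) by simp
qed



lemma rp_inj: "rp a = rp b \<Longrightarrow> a = b"
  by (auto simp: rp_def prod_eq_iff)

lemma hval_rp: "hval (\<alpha>, \<beta>, c) (rp p) = of_int (\<alpha> * fst p + \<beta> * snd p + c)"
  by (simp add: hval_def rp_def)

lemma hval_affine: "hval h ((1-u) *\<^sub>R x + u *\<^sub>R y) = (1-u) * hval h x + u * hval h y"
  by (cases h) (simp add: hval_def algebra_simps)

locale setting =
  fixes A :: "(int \<times> int) set"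
  assumes finA: "finite A" and dim2: "aff_dim (Delta A) = 2"
begin

lemma polyD: "polytope (Delta A)"
  unfolding Delta_def by (rule polytope_convex_hull) (simp add: finA)

lemma polyhD: "polyhedron (Delta A)"
  by (rule polytope_imp_polyhedron[OF polyD])

lemma convD: "convex (Delta A)"
  by (rule polytope_imp_convex[OF polyD])

lemma rp_in: "a \<in> A \<Longrightarrow> rp a \<in> Delta A"
  unfolding Delta_def by (rule hull_inc) simp

lemma edge_seg:
  assumes "is_edge (Delta A) e"
  obtains p q where "p \<in> A" "q \<in> A" "p \<noteq> q" "e = closed_segment (rp p) (rp q)"
    "rp p extreme_point_of (Delta A)" "rp q extreme_point_of (Delta A)"
proof -
  have fe: "e face_of (Delta A)" and ae: "aff_dim e = 1" using assms by (auto simp: is_edge_def)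
  have "polytope e" by (rule face_of_polytope_polytope[OF polyD fe])
  then have "compact e" "convex e" by (auto simp: polytope_imp_compact polytope_imp_convex)
  moreover have "e \<noteq> {}" using ae by auto
  moreover have "collinear e" using ae by (simp add: collinear_aff_dim)
  ultimately obtain v0 v1 where e: "e = closed_segment v0 v1"
    using compact_convex_collinear_segment by blast
  have ne: "v0 \<noteq> v1" using ae e by auto
  have ex: "v extreme_point_of (Delta A) \<and> v \<in> rp ` A" if "v = v0 \<or> v = v1" for v
  proof -
    have "v extreme_point_of e" using that e by (auto simp: extreme_point_of_segment)
    then have "v extreme_point_of (Delta A)" using extreme_point_of_face[OF fe] by blast
    moreover then have "v \<in> rp ` A" unfolding Delta_def by (rule extreme_point_of_convex_hull)
    ultimately show ?thesis by blast
  qed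
  obtain p where p: "p \<in> A" "v0 = rp p" using ex by blast
  obtain q where q: "q \<in> A" "v1 = rp q" using ex by blast
  show ?thesis
    by (rule that[of p q]) (use p q e ne ex in auto)
qed

lemma edge_fun:
  assumes "is_edge (Delta A) e"
  obtains h where "h \<in> edge_ineqs A" "\<forall>x\<in>e. hval h x = 0"
    "\<forall>x\<in>Delta A. x \<notin> e \<longrightarrow> hval h x > 0"
proof -
  have fe: "e face_of (Delta A)" and ae: "aff_dim e = 1" using assms by (auto simp: is_edge_def)
  obtain a b where sub: "Delta A \<subseteq> {x. a \<bullet> x \<le> b}" and eq: "e = Delta A \<inter> {x. a \<bullet> x = b}"
    using exposed_face_of_polyhedron[OF polyhD] fe unfolding exposed_face_of_def by blast
  obtain p q where pq: "p \<in> A" "q \<in> A" "p \<noteq> q" "e = closed_segment (rp p) (rp q)"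
    using edge_seg assms by metis
  have "rp p \<in> e" "rp q \<in> e" by (simp_all add: pq)
  then have hp: "a \<bullet> rp p = b" and hq: "a \<bullet> rp q = b" using eq by auto
  define P where "P = fst q - fst p"
  define Q where "Q = snd q - snd p"
  have PQ: "P \<noteq> 0 \<or> Q \<noteq> 0" using pq(3) by (auto simp: P_def Q_def prod_eq_iff)
  have ort: "fst a * of_int P + snd a * of_int Q = 0"
  proof -
    have "a \<bullet> rp q - a \<bullet> rp p = 0" using hp hq by simp
    then show ?thesis by (cases a) (simp add: rp_def P_def Q_def algebra_simps)
  qed
  have a0: "a \<noteq> 0"
  proof
    assume "a = 0"
    then have "e = Delta A \<or> e = {}" using eq by (cases "b = 0") auto
    then show False using ae dim2 by auto
  qed
  obtain t where t: "t \<noteq> 0" "fst a = t * of_int Q" "snd a = - t * of_int P"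
  proof (cases "P = 0")
    case True
    then have Q0: "Q \<noteq> 0" using PQ by simp
    then have s0: "snd a = 0" using ort True by simp
    have "fst a \<noteq> 0" using a0 s0 by (simp add: prod_eq_iff)
    then show ?thesis using Q0 s0 True by (intro that[of "fst a / of_int Q"]) auto
  next
    case False
    have f: "fst a = (- snd a / of_int P) * of_int Q"
      using ort False by (simp add: field_simps)
    have "snd a \<noteq> 0" using a0 f by (auto simp: prod_eq_iff)
    then show ?thesis using False f by (intro that[of "- snd a / of_int P"]) auto
  qed
  define g where "g = gcd P Q"
  have g0: "g > 0" using PQ by (simp add: g_def)
  define \<alpha> where "\<alpha> = Q div g"
  define \<beta> where "\<beta> = - (P div g)"
  have Qg: "Q = g * \<alpha>" unfolding \<alpha>_def g_def by simp
  have Pg: "P = - g * \<beta>" unfolding \<beta>_def g_def by simp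
  have cop: "gcd \<alpha> \<beta> = 1"
  proof -
    have "coprime (P div g) (Q div g)" unfolding g_def by (rule div_gcd_coprime[OF PQ])
    then show ?thesis by (simp add: \<alpha>_def \<beta>_def coprime_iff_gcd_eq_1 gcd.commute)
  qed
  define c where "c = - (\<alpha> * fst p + \<beta> * snd p)"
  define k where "k = t * of_int g"
  have k0: "k \<noteq> 0" using t g0 by (simp add: k_def)
  have key: "a \<bullet> x - b = k * hval (\<alpha>, \<beta>, c) x" for x
  proof -
    have "a \<bullet> x - b = a \<bullet> x - a \<bullet> rp p" using hp by simp
    also have "\<dots> = fst a * (fst x - of_int (fst p)) + snd a * (snd x - of_int (snd p))"
      by (cases a, cases x) (simp add: rp_def algebra_simps)
    also have "\<dots> = k * hval (\<alpha>, \<beta>, c) x"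
      by (simp add: t Qg Pg k_def hval_def c_def algebra_simps)
    finally show ?thesis .
  qed
  obtain h where hdef: "\<And>x. hval h x = - (a \<bullet> x - b) / \<bar>k\<bar>" and hg: "gcd (fst h) (fst (snd h)) = 1"
  proof (cases "k > 0")
    case True
    show ?thesis
    proof (rule that[of "(-\<alpha>, -\<beta>, -c)"])
      fix x show "hval (-\<alpha>, -\<beta>, -c) x = - (a \<bullet> x - b) / \<bar>k\<bar>"
        using True key[of x] by (simp add: hval_def field_simps)
    qed (simp add: cop)
  next
    case False
    then have kn: "k < 0" using k0 by simp
    show ?thesis
    proof (rule that[of "(\<alpha>, \<beta>, c)"])
      fix x show "hval (\<alpha>, \<beta>, c) x = - (a \<bullet> x - b) / \<bar>k\<bar>"
        using kn key[of x] by (simp add: field_simps)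
    qed (simp add: cop)
  qed
  have pos: "\<forall>x\<in>Delta A. hval h x \<ge> 0" using sub hdef k0 by (auto simp: divide_nonneg_pos)
  have zero: "\<forall>x\<in>e. hval h x = 0" using eq hdef by auto
  have gt: "\<forall>x\<in>Delta A. x \<notin> e \<longrightarrow> hval h x > 0"
  proof (intro ballI impI)
    fix x assume x: "x \<in> Delta A" "x \<notin> e"
    then have "a \<bullet> x < b" using sub eq by fastforce
    then show "hval h x > 0" using hdef k0 by (simp add: divide_pos_pos)
  qed
  have "h \<in> edge_ineqs A"
    unfolding edge_ineqs_def using hg pos zero assms by (cases h) auto
  then show ?thesis using that zero gt by blast
qed

lemma vertex_sep:
  assumes v: "v extreme_point_of (Delta A)" and p: "p \<in> Delta A" "p \<noteq> v"
  obtains e where "is_edge (Delta A) e" "v \<in> e" "p \<notin> e"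
proof -
  have f: "{v} face_of Delta A" using v by (simp add: face_of_singleton)
  have "{v} \<noteq> Delta A" using dim2 by (metis aff_dim_sing zero_neq_numeral)
  then have "{v} = \<Inter>{F. F facet_of Delta A \<and> {v} \<subseteq> F}"
    using face_of_polyhedron[OF polyhD f] by blast
  then obtain F where F: "F facet_of Delta A" "v \<in> F" "p \<notin> F" using p by blast
  have "is_edge (Delta A) F" using F(1) dim2 by (simp add: facet_of_def is_edge_def)
  then show ?thesis using that F by blast
qed

end


context setting begin

lemma Ane: "A \<noteq> {}"
  using dim2 by (auto simp: Delta_def)

lemma edge_ineqs_fin: "finite (edge_ineqs A)"
proof -
  define K where "K = Max ((\<lambda>p. \<bar>fst p\<bar> + \<bar>snd p\<bar>) ` A)"
  have Kb: "\<bar>fst p\<bar> \<le> K" "\<bar>snd p\<bar> \<le> K" if "p \<in> A" for p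
  proof -
    have "\<bar>fst p\<bar> + \<bar>snd p\<bar> \<le> K" unfolding K_def using finA that by (intro Max_ge) auto
    then show "\<bar>fst p\<bar> \<le> K" "\<bar>snd p\<bar> \<le> K" by auto
  qed
  define R where "R = 4 * K * K + 2 * K"
  have "edge_ineqs A \<subseteq> {-R..R} \<times> {-R..R} \<times> {-R..R}"
  proof
    fix h assume h: "h \<in> edge_ineqs A"
    obtain \<alpha> \<beta> c where hh: "h = (\<alpha>, \<beta>, c)" by (cases h)
    from h obtain e where g1: "gcd \<alpha> \<beta> = 1" and ed: "is_edge (Delta A) e"
      and z: "\<forall>x\<in>e. hval h x = 0"
      unfolding edge_ineqs_def hh by auto
    obtain p q where pq: "p \<in> A" "q \<in> A" "p \<noteq> q" "e = closed_segment (rp p) (rp q)"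
      using edge_seg ed by metis
    have "hval h (rp p) = 0" "hval h (rp q) = 0" using z pq by auto
    then have zp: "\<alpha> * fst p + \<beta> * snd p + c = 0" and zq: "\<alpha> * fst q + \<beta> * snd q + c = 0"
      by (simp_all add: hh hval_rp del: of_int_add of_int_mult)
    define P where "P = fst q - fst p"
    define Q where "Q = snd q - snd p"
    have PQ: "P \<noteq> 0 \<or> Q \<noteq> 0" using pq(3) by (auto simp: P_def Q_def prod_eq_iff)
    have lin: "\<alpha> * P + \<beta> * Q = 0" using zp zq by (simp add: P_def Q_def algebra_simps)
    have cop: "coprime \<alpha> \<beta>" using g1 by (simp add: coprime_iff_gcd_eq_1)
    have aQ: "\<bar>\<alpha>\<bar> \<le> \<bar>Q\<bar>"
    proof (cases "Q = 0")
      case True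
      then have "\<alpha> * P = 0" "P \<noteq> 0" using lin PQ by auto
      then show ?thesis by simp
    next
      case False
      have "\<beta> * Q = - (\<alpha> * P)" using lin by linarith
      then have "\<alpha> dvd \<beta> * Q" by (metis dvd_minus_iff dvd_triv_left)
      then have "\<alpha> dvd Q" using cop by (simp add: coprime_dvd_mult_right_iff)
      then show ?thesis by (rule dvd_imp_le_int[OF False])
    qed
    have bP: "\<bar>\<beta>\<bar> \<le> \<bar>P\<bar>"
    proof (cases "P = 0")
      case True
      then have "\<beta> * Q = 0" "Q \<noteq> 0" using lin PQ by auto
      then show ?thesis by simp
    next
      case False
      have "\<alpha> * P = - (\<beta> * Q)" using lin by linarith
      then have "\<beta> dvd \<alpha> * P" by (metis dvd_minus_iff dvd_triv_left)
      then have "\<beta> dvd P" using cop by (simp add: coprime_dvd_mult_right_iff coprime_commute)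
      then show ?thesis by (rule dvd_imp_le_int[OF False])
    qed
    have K0: "K \<ge> 0" using Kb[OF pq(1)] by linarith
    have P2: "\<bar>P\<bar> \<le> 2 * K" "\<bar>Q\<bar> \<le> 2 * K" using Kb[OF pq(1)] Kb[OF pq(2)]
      by (auto simp: P_def Q_def)
    have c1: "\<bar>\<alpha> * fst p\<bar> \<le> 2 * K * K"
      unfolding abs_mult using aQ P2 Kb[OF pq(1)] K0 by (intro mult_mono) auto
    have c2: "\<bar>\<beta> * snd p\<bar> \<le> 2 * K * K"
      unfolding abs_mult using bP P2 Kb[OF pq(1)] K0 by (intro mult_mono) auto
    have cb: "\<bar>c\<bar> \<le> 4 * K * K" using zp c1 c2 by linarith
    have KK: "K * K \<ge> 0" using K0 by simp
    have "\<bar>\<alpha>\<bar> \<le> R" "\<bar>\<beta>\<bar> \<le> R" "\<bar>c\<bar> \<le> R"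
      unfolding R_def using aQ bP P2 KK cb K0 by linarith+
    then show "h \<in> {-R..R} \<times> {-R..R} \<times> {-R..R}"
      by (simp add: hh abs_le_iff)
  qed
  then show ?thesis by (rule finite_subset) simp
qed

lemma kk: assumes "h \<in> edge_ineqs A" "a \<in> A"
  shows "hval h (rp a) \<ge> 0" "real (nat \<lfloor>hval h (rp a)\<rfloor>) = hval h (rp a)"
proof -
  have "rp a \<in> Delta A" by (rule rp_in[OF assms(2)])
  then show nn: "hval h (rp a) \<ge> 0" using assms(1) unfolding edge_ineqs_def by blast
  obtain \<alpha> \<beta> c where hh: "h = (\<alpha>, \<beta>, c)" by (cases h)
  define m where "m = \<alpha> * fst a + \<beta> * snd a + c"
  have hm: "hval h (rp a) = of_int m" unfolding hh hval_rp m_def ..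
  show "real (nat \<lfloor>hval h (rp a)\<rfloor>) = hval h (rp a)"
    using nn unfolding hm by simp
qed

lemma hpos_D: "h \<in> edge_ineqs A \<Longrightarrow> x \<in> Delta A \<Longrightarrow> hval h x \<ge> 0"
  unfolding edge_ineqs_def by auto

lemma bern_nonneg: "x \<in> Delta A \<Longrightarrow> bernstein A a x \<ge> 0"
  unfolding bernstein_def using hpos_D by (intro prod_nonneg) auto

lemma bern_zero:
  assumes "h \<in> edge_ineqs A" "a \<in> A" "hval h x = 0" "hval h (rp a) > 0"
  shows "bernstein A a x = 0"
proof -
  have "nat \<lfloor>hval h (rp a)\<rfloor> \<noteq> 0" using kk[OF assms(1,2)] assms(4) by (metis of_nat_0 less_irrefl)
  then have "hval h x ^ nat \<lfloor>hval h (rp a)\<rfloor> = 0" using assms(3) by simp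
  then show ?thesis unfolding bernstein_def using edge_ineqs_fin assms(1)
    by (metis (no_types, lifting) prod_zero_iff)
qed

lemma bern_pos:
  assumes "a \<in> A" "x \<in> Delta A" "\<And>h. h \<in> edge_ineqs A \<Longrightarrow> hval h x > 0 \<or> hval h (rp a) = 0"
  shows "bernstein A a x > 0"
  unfolding bernstein_def
proof (rule prod_pos)
  fix h assume h: "h \<in> edge_ineqs A"
  show "hval h x ^ nat \<lfloor>hval h (rp a)\<rfloor> > 0"
    using assms(3)[OF h] by auto
qed

lemma ln_bern:
  assumes "a \<in> A" "x \<in> Delta A" "\<And>h. h \<in> edge_ineqs A \<Longrightarrow> hval h x > 0 \<or> hval h (rp a) = 0"
  shows "ln (bernstein A a x) = (\<Sum>h\<in>edge_ineqs A. hval h (rp a) * ln (hval h x))"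
proof -
  have fp: "hval h x ^ nat \<lfloor>hval h (rp a)\<rfloor> > 0" if "h \<in> edge_ineqs A" for h
    using assms(3)[OF that] by auto
  have "ln (bernstein A a x) = (\<Sum>h\<in>edge_ineqs A. ln (hval h x ^ nat \<lfloor>hval h (rp a)\<rfloor>))"
    unfolding bernstein_def by (rule ln_prod[OF edge_ineqs_fin]) (metis fp less_irrefl)
  also have "\<dots> = (\<Sum>h\<in>edge_ineqs A. hval h (rp a) * ln (hval h x))"
  proof (rule sum.cong)
    fix h assume h: "h \<in> edge_ineqs A"
    show "ln (hval h x ^ nat \<lfloor>hval h (rp a)\<rfloor>) = hval h (rp a) * ln (hval h x)"
    proof (cases "hval h x > 0")
      case True
      then show ?thesis using kk[OF h assms(1)] by (simp add: ln_realpow)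
    next
      case False
      then have "hval h (rp a) = 0" using assms(3)[OF h] by auto
      then show ?thesis by simp
    qed
  qed simp
  finally show ?thesis .
qed

end


context setting begin

lemma bern_vert_zero:
  assumes "b \<in> A" "rp b extreme_point_of Delta A" "a \<in> A" "a \<noteq> b"
  shows "bernstein A a (rp b) = 0"
proof -
  have "rp a \<noteq> rp b" using assms(4) rp_inj by blast
  then obtain e where e: "is_edge (Delta A) e" "rp b \<in> e" "rp a \<notin> e"
    using vertex_sep[OF assms(2) rp_in[OF assms(3)]] by metis
  obtain h where h: "h \<in> edge_ineqs A" "\<forall>x\<in>e. hval h x = 0" "\<forall>x\<in>Delta A. x \<notin> e \<longrightarrow> hval h x > 0"
    using edge_fun[OF e(1)] by metis
  show ?thesis
    by (rule bern_zero[OF h(1) assms(3)]) (use h e rp_in[OF assms(3)] in auto)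
qed

lemma bern_vert_pos:
  assumes "b \<in> A"
  shows "bernstein A b (rp b) > 0"
proof (rule bern_pos[OF assms rp_in[OF assms]])
  fix h assume h: "h \<in> edge_ineqs A"
  have "hval h (rp b) \<ge> 0" by (rule hpos_D[OF h rp_in[OF assms]])
  then show "hval h (rp b) > 0 \<or> hval h (rp b) = 0" by auto
qed

lemma patch_vertex:
  assumes "b \<in> A" "rp b extreme_point_of Delta A" "\<forall>a\<in>A. w a > 0"
  shows "toric_patch A w f (rp b) = f b"
proof -
  have z: "bernstein A a (rp b) = 0" if "a \<in> A - {b}" for a
    using bern_vert_zero[OF assms(1,2)] that by blast
  have S: "(\<Sum>a\<in>A. w a * bernstein A a (rp b)) = w b * bernstein A b (rp b)"
    using sum.remove[OF finA assms(1), of "\<lambda>a. w a * bernstein A a (rp b)"] z by simp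
  have V: "(\<Sum>a\<in>A. (w a * bernstein A a (rp b)) *\<^sub>R f a) = (w b * bernstein A b (rp b)) *\<^sub>R f b"
    using sum.remove[OF finA assms(1), of "\<lambda>a. (w a * bernstein A a (rp b)) *\<^sub>R f a"] z by simp
  define s where "s = w b * bernstein A b (rp b)"
  have "s > 0" using assms(1,3) bern_vert_pos[OF assms(1)] by (simp add: s_def)
  then show ?thesis unfolding toric_patch_def S V s_def[symmetric] by simp
qed

end

lemma seg_param_unique:
  assumes "v0 \<noteq> v1" "(1-s) *\<^sub>R v0 + s *\<^sub>R v1 = (1-s') *\<^sub>R v0 + s' *\<^sub>R (v1::real\<times>real)"
  shows "s = s'"
proof -
  have "(s - s') *\<^sub>R (v1 - v0) = 0" using assms(2) by (simp add: algebra_simps)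
  then show ?thesis using assms(1) by simp
qed

locale edge_ctx = setting +
  fixes f :: "int \<times> int \<Rightarrow> real \<times> real" and w :: "int \<times> int \<Rightarrow> real"
    and \<delta> :: "(real \<times> real) set" and a0 a1 :: "int \<times> int"
  assumes comp: "compatible A f" and wpos: "\<forall>a\<in>A. w a > 0"
    and edge: "is_edge (Delta A) \<delta>"
    and a0A: "a0 \<in> A" and a1A: "a1 \<in> A" and a01: "a0 \<noteq> a1"
    and seg: "\<delta> = closed_segment (rp a0) (rp a1)"
    and ex0: "rp a0 extreme_point_of Delta A" and ex1: "rp a1 extreme_point_of Delta A"
begin

definition pt :: "real \<Rightarrow> real \<times> real" where "pt t = (1-t) *\<^sub>R rp a0 + t *\<^sub>R rp a1"

lemma v01: "rp a0 \<noteq> rp a1" using a01 rp_inj by blast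

lemma pt_inj: "pt s = pt s' \<Longrightarrow> s = s'"
  unfolding pt_def using seg_param_unique[OF v01] by blast

lemma pt0: "pt 0 = rp a0" and pt1: "pt 1 = rp a1" by (simp_all add: pt_def)

lemma pt_in: "0 \<le> t \<Longrightarrow> t \<le> 1 \<Longrightarrow> pt t \<in> \<delta>"
  unfolding seg pt_def in_segment by blast

lemma in_delta: "x \<in> \<delta> \<Longrightarrow> \<exists>t. 0 \<le> t \<and> t \<le> 1 \<and> x = pt t"
  unfolding seg pt_def in_segment by blast

lemma delta_sub: "\<delta> \<subseteq> Delta A"
  using edge by (simp add: is_edge_def face_of_imp_subset)

lemma pt_D: "0 \<le> t \<Longrightarrow> t \<le> 1 \<Longrightarrow> pt t \<in> Delta A"
  using pt_in delta_sub by blast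

lemma hval_pt: "hval h (pt t) = (1-t) * hval h (rp a0) + t * hval h (rp a1)"
  unfolding pt_def by (rule hval_affine)

definition hd where "hd = (SOME h. h \<in> edge_ineqs A \<and> (\<forall>x\<in>\<delta>. hval h x = 0) \<and>
    (\<forall>x\<in>Delta A. x \<notin> \<delta> \<longrightarrow> hval h x > 0))"

lemma hd: "hd \<in> edge_ineqs A" "\<forall>x\<in>\<delta>. hval hd x = 0" "\<forall>x\<in>Delta A. x \<notin> \<delta> \<longrightarrow> hval hd x > 0"
proof -
  obtain h where "h \<in> edge_ineqs A" "\<forall>x\<in>\<delta>. hval h x = 0" "\<forall>x\<in>Delta A. x \<notin> \<delta> \<longrightarrow> hval h x > 0"
    using edge_fun[OF edge] by metis
  then have "\<exists>h. h \<in> edge_ineqs A \<and> (\<forall>x\<in>\<delta>. hval h x = 0) \<and> (\<forall>x\<in>Delta A. x \<notin> \<delta> \<longrightarrow> hval h x > 0)"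
    by blast
  from someI_ex[OF this] show "hd \<in> edge_ineqs A" "\<forall>x\<in>\<delta>. hval hd x = 0"
    "\<forall>x\<in>Delta A. x \<notin> \<delta> \<longrightarrow> hval hd x > 0" unfolding hd_def by blast+
qed

definition I where "I = {a\<in>A. rp a \<in> \<delta>}"
definition \<sigma> where "\<sigma> a = (SOME s. 0 \<le> s \<and> s \<le> 1 \<and> rp a = pt s)"

lemma finI: "finite I" unfolding I_def using finA by simp

lemma IA: "I \<subseteq> A" unfolding I_def by blast

lemma a0I: "a0 \<in> I" and a1I: "a1 \<in> I"
  unfolding I_def using a0A a1A seg by auto

lemma sig: assumes "a \<in> I" shows "0 \<le> \<sigma> a" "\<sigma> a \<le> 1" "rp a = pt (\<sigma> a)"
proof -
  have "\<exists>s. 0 \<le> s \<and> s \<le> 1 \<and> rp a = pt s" using assms in_delta unfolding I_def by blast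
  from someI_ex[OF this] show "0 \<le> \<sigma> a" "\<sigma> a \<le> 1" "rp a = pt (\<sigma> a)"
    unfolding \<sigma>_def by blast+
qed

lemma sig0: "\<sigma> a0 = 0"
proof -
  have "pt (\<sigma> a0) = pt 0" using sig(3)[OF a0I] pt0 by simp
  then show ?thesis by (rule pt_inj)
qed

lemma sig1: "\<sigma> a1 = 1"
proof -
  have "pt (\<sigma> a1) = pt 1" using sig(3)[OF a1I] pt1 by simp
  then show ?thesis by (rule pt_inj)
qed

lemma sig_first: assumes "a \<in> I" "a \<noteq> a0" shows "0 < \<sigma> a"
proof -
  have "\<sigma> a \<noteq> 0"
  proof
    assume "\<sigma> a = 0"
    then have "rp a = rp a0" using sig(3)[OF assms(1)] pt0 by simp
    then show False using rp_inj assms(2) by blast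
  qed
  then show ?thesis using sig(1)[OF assms(1)] by simp
qed

lemma sig_last: assumes "a \<in> I" "a \<noteq> a1" shows "\<sigma> a < 1"
proof -
  have "\<sigma> a \<noteq> 1"
  proof
    assume "\<sigma> a = 1"
    then have "rp a = rp a1" using sig(3)[OF assms(1)] pt1 by simp
    then show False using rp_inj assms(2) by blast
  qed
  then show ?thesis using sig(2)[OF assms(1)] by simp
qed

lemma bern_off: assumes "a \<in> A" "a \<notin> I" "x \<in> \<delta>" shows "bernstein A a x = 0"
proof (rule bern_zero[OF hd(1) assms(1)])
  show "hval hd x = 0" using hd(2) assms(3) by blast
  have "rp a \<notin> \<delta>" using assms(1,2) by (simp add: I_def)
  then show "hval hd (rp a) > 0" using hd(3) rp_in[OF assms(1)] by blast
qed

lemma F0: "toric_patch A w f (pt 0) = f a0"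
  unfolding pt0 by (rule patch_vertex[OF a0A ex0 wpos])

lemma F1: "toric_patch A w f (pt 1) = f a1"
  unfolding pt1 by (rule patch_vertex[OF a1A ex1 wpos])

lemma int_cond:
  assumes "a \<in> I" "0 < t" "t < 1" "h \<in> edge_ineqs A"
  shows "hval h (pt t) > 0 \<or> hval h (rp a) = 0"
proof -
  have n0: "hval h (rp a0) \<ge> 0" "hval h (rp a1) \<ge> 0"
    using hpos_D[OF assms(4)] rp_in a0A a1A by auto
  show ?thesis
  proof (cases "hval h (rp a0) = 0 \<and> hval h (rp a1) = 0")
    case True
    then show ?thesis using sig(3)[OF assms(1)] hval_pt by simp
  next
    case False
    have m: "(1-t) * hval h (rp a0) \<ge> 0" "t * hval h (rp a1) \<ge> 0"
      using n0 assms(2,3) by simp_all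
    have "(1-t) * hval h (rp a0) > 0 \<or> t * hval h (rp a1) > 0"
      using False n0 assms(2,3) by (auto simp: less_eq_real_def)
    then have "(1-t) * hval h (rp a0) + t * hval h (rp a1) > 0"
      using m by linarith
    then show ?thesis using hval_pt by simp
  qed
qed

lemma bern_int_pos: assumes "a \<in> I" "0 < t" "t < 1" shows "bernstein A a (pt t) > 0"
proof (rule bern_pos)
  show "a \<in> A" using assms(1) IA by blast
  show "pt t \<in> Delta A" using pt_D assms by simp
  show "hval h (pt t) > 0 \<or> hval h (rp a) = 0" if "h \<in> edge_ineqs A" for h
    using int_cond[OF assms that] .
qed

lemma patch_int:
  assumes "0 < t" "t < 1"
  shows "toric_patch A w f (pt t) =
    (1 / (\<Sum>a\<in>I. w a * bernstein A a (pt t))) *\<^sub>R (\<Sum>a\<in>I. (w a * bernstein A a (pt t)) *\<^sub>R f a)"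
proof -
  have z: "bernstein A a (pt t) = 0" if "a \<in> A - I" for a
    using bern_off that pt_in assms by auto
  have "(\<Sum>a\<in>A. w a * bernstein A a (pt t)) = (\<Sum>a\<in>I. w a * bernstein A a (pt t))"
    by (rule sum.mono_neutral_right[OF finA IA]) (simp add: z)
  moreover have "(\<Sum>a\<in>A. (w a * bernstein A a (pt t)) *\<^sub>R f a) = (\<Sum>a\<in>I. (w a * bernstein A a (pt t)) *\<^sub>R f a)"
    by (rule sum.mono_neutral_right[OF finA IA]) (simp add: z)
  ultimately show ?thesis unfolding toric_patch_def by simp
qed

end


context edge_ctx begin

definition L where "L tx ty h = ln (hval h (pt ty)) - ln (hval h (pt tx))"
definition KK where "KK tx ty = (\<Sum>h\<in>edge_ineqs A. hval h (rp a0) * L tx ty h)"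
definition MM where "MM tx ty = (\<Sum>h\<in>edge_ineqs A. (hval h (rp a1) - hval h (rp a0)) * L tx ty h)"

lemma ln_ratio:
  assumes a: "a \<in> I" and t: "0 < tx" "tx < 1" "0 < ty" "ty < 1"
  shows "ln (bernstein A a (pt ty)) - ln (bernstein A a (pt tx)) = KK tx ty + \<sigma> a * MM tx ty"
proof -
  have aA: "a \<in> A" using a IA by blast
  have ly: "ln (bernstein A a (pt ty)) = (\<Sum>h\<in>edge_ineqs A. hval h (rp a) * ln (hval h (pt ty)))"
    by (rule ln_bern[OF aA pt_D]) (use t int_cond[OF a t(3,4)] in auto)
  have lx: "ln (bernstein A a (pt tx)) = (\<Sum>h\<in>edge_ineqs A. hval h (rp a) * ln (hval h (pt tx)))"
    by (rule ln_bern[OF aA pt_D]) (use t int_cond[OF a t(1,2)] in auto)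
  have "ln (bernstein A a (pt ty)) - ln (bernstein A a (pt tx)) =
      (\<Sum>h\<in>edge_ineqs A. hval h (rp a) * L tx ty h)"
    unfolding ly lx L_def by (simp add: sum_subtractf right_diff_distrib)
  also have "\<dots> = (\<Sum>h\<in>edge_ineqs A. hval h (rp a0) * L tx ty h +
       \<sigma> a * ((hval h (rp a1) - hval h (rp a0)) * L tx ty h))"
    by (rule sum.cong) (simp_all add: sig(3)[OF a] hval_pt algebra_simps)
  also have "\<dots> = KK tx ty + \<sigma> a * MM tx ty"
    by (simp add: KK_def MM_def sum.distrib sum_distrib_left)
  finally show ?thesis .
qed

lemma MM_pos:
  assumes t: "0 < tx" "tx < ty" "ty < 1"
  shows "MM tx ty > 0"
proof -
  have tm: "(hval h (rp a1) - hval h (rp a0)) * L tx ty h > 0"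
    if h: "h \<in> edge_ineqs A" and ne: "hval h (rp a1) \<noteq> hval h (rp a0)" for h
  proof -
    define h0 where "h0 = hval h (rp a0)"
    define h1 where "h1 = hval h (rp a1)"
    have n0: "h0 \<ge> 0" "h1 \<ge> 0" unfolding h0_def h1_def using hpos_D[OF h] rp_in a0A a1A by auto
    have hx: "hval h (pt tx) = (1-tx) * h0 + tx * h1" and hy: "hval h (pt ty) = (1-ty) * h0 + ty * h1"
      by (simp_all add: hval_pt h0_def h1_def)
    have diff: "hval h (pt ty) - hval h (pt tx) = (ty - tx) * (h1 - h0)"
      unfolding hx hy by (simp add: algebra_simps)
    have pos: "hval h (pt tx) > 0" "hval h (pt ty) > 0"
    proof -
      have "h0 > 0 \<or> h1 > 0" using ne n0 h0_def h1_def by auto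
      then show "hval h (pt tx) > 0" "hval h (pt ty) > 0"
        unfolding hx hy using n0 t
        by (auto intro: add_pos_nonneg add_nonneg_pos)
    qed
    show ?thesis
    proof (cases "h1 > h0")
      case True
      then have "hval h (pt tx) < hval h (pt ty)" using diff t
        by (smt (verit) mult_pos_pos)
      then have "L tx ty h > 0" using pos by (simp add: L_def)
      then show ?thesis using True h0_def h1_def by simp
    next
      case False
      then have "h1 < h0" using ne h0_def h1_def by simp
      then have "hval h (pt ty) < hval h (pt tx)" using diff t
        by (smt (verit) mult_pos_neg)
      then have "L tx ty h < 0" using pos by (simp add: L_def)
      then show ?thesis using \<open>h1 < h0\<close> h0_def h1_def by (simp add: mult_neg_neg)
    qed
  qed
  have nn: "(hval h (rp a1) - hval h (rp a0)) * L tx ty h \<ge> 0" if h: "h \<in> edge_ineqs A" for h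
    using tm[OF h] by (cases "hval h (rp a1) = hval h (rp a0)") auto
  have "rp a0 \<noteq> rp a1" by (rule v01)
  then obtain e where e: "is_edge (Delta A) e" "rp a1 \<in> e" "rp a0 \<notin> e"
    using vertex_sep[OF ex1 rp_in[OF a0A]] by metis
  obtain h where h: "h \<in> edge_ineqs A" "\<forall>x\<in>e. hval h x = 0" "\<forall>x\<in>Delta A. x \<notin> e \<longrightarrow> hval h x > 0"
    using edge_fun[OF e(1)] by metis
  have "hval h (rp a1) = 0" "hval h (rp a0) > 0" using h e rp_in[OF a0A] by auto
  then have "(hval h (rp a1) - hval h (rp a0)) * L tx ty h > 0" using tm[OF h(1)] by simp
  also have "(hval h (rp a1) - hval h (rp a0)) * L tx ty h \<le> MM tx ty"
    unfolding MM_def by (rule member_le_sum[OF h(1) nn edge_ineqs_fin]) simp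
  finally show ?thesis .
qed

end


lemma det2_swap01: "det2 (p0 - p1) (p2 - p1) = - det2 (p1 - p0) (p2 - p0)"
  by (simp add: det2_def algebra_simps)

lemma sgn_pm1: "(x::real) \<noteq> 0 \<Longrightarrow> sgn x = 1 \<or> sgn x = -1"
  by (simp add: sgn_if)

lemma orient_transfer:
  assumes wc: "weakly_compatible A f"
  obtains od ofc :: real where "od \<noteq> 0" "ofc \<noteq> 0"
    "\<And>b0 b1 b2. b0\<in>A \<Longrightarrow> b1\<in>A \<Longrightarrow> b2\<in>A \<Longrightarrow> det2 (rp b1 - rp b0) (rp b2 - rp b0) \<noteq> 0 \<Longrightarrow>
       det2 (f b1 - f b0) (f b2 - f b0) \<noteq> 0 \<Longrightarrow>
       sgn (det2 (f b1 - f b0) (f b2 - f b0)) = od * ofc * sgn (det2 (rp b1 - rp b0) (rp b2 - rp b0))"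
proof -
  obtain r0 r1 r2 where r: "r0 \<in> A" "r1 \<in> A" "r2 \<in> A"
    and i1: "aff_indep3 (rp r0) (rp r1) (rp r2)" and i2: "aff_indep3 (f r0) (f r1) (f r2)"
    and P: "\<And>b0 b1 b2. b0\<in>A \<Longrightarrow> b1\<in>A \<Longrightarrow> b2\<in>A \<Longrightarrow>
          aff_indep3 (rp b0) (rp b1) (rp b2) \<Longrightarrow>
          orientation (rp b0) (rp b1) (rp b2) = orientation (rp r0) (rp r1) (rp r2) \<Longrightarrow>
          aff_indep3 (f b0) (f b1) (f b2) \<Longrightarrow>
          orientation (f b0) (f b1) (f b2) = orientation (f r0) (f r1) (f r2)"
    using wc unfolding weakly_compatible_def by blast
  define od where "od = orientation (rp r0) (rp r1) (rp r2)"
  define ofc where "ofc = orientation (f r0) (f r1) (f r2)"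
  have od: "od = 1 \<or> od = -1" unfolding od_def orientation_def
    using i1 by (intro sgn_pm1) (simp add: aff_indep3_iff)
  have ofc: "ofc = 1 \<or> ofc = -1" unfolding ofc_def orientation_def
    using i2 by (intro sgn_pm1) (simp add: aff_indep3_iff)
  show ?thesis
  proof (rule that)
    show "od \<noteq> 0" "ofc \<noteq> 0" using od ofc by auto
    fix b0 b1 b2 assume b: "b0\<in>A" "b1\<in>A" "b2\<in>A"
      and dd: "det2 (rp b1 - rp b0) (rp b2 - rp b0) \<noteq> 0"
      and di: "det2 (f b1 - f b0) (f b2 - f b0) \<noteq> 0"
    consider "sgn (det2 (rp b1 - rp b0) (rp b2 - rp b0)) = od"
      | "sgn (det2 (rp b1 - rp b0) (rp b2 - rp b0)) = - od"
      using sgn_pm1[OF dd] od by auto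
    then show "sgn (det2 (f b1 - f b0) (f b2 - f b0)) =
        od * ofc * sgn (det2 (rp b1 - rp b0) (rp b2 - rp b0))"
    proof cases
      case 1
      have "orientation (f b0) (f b1) (f b2) = ofc"
        using P[OF b] dd di 1 unfolding ofc_def od_def by (simp add: aff_indep3_iff orientation_def)
      then show ?thesis using 1 od by (auto simp: orientation_def)
    next
      case 2
      have "orientation (f b1) (f b0) (f b2) = ofc"
        using P[OF b(2,1,3)] dd di 2 unfolding ofc_def od_def
        by (simp add: aff_indep3_iff orientation_def det2_swap01[of "rp b0"] det2_swap01[of "f b0"] sgn_minus)
      then have "sgn (det2 (f b1 - f b0) (f b2 - f b0)) = - ofc"
        by (simp add: orientation_def det2_swap01[of "f b0"] sgn_minus)
      then show ?thesis using 2 od by auto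
    qed
  qed
qed

context edge_ctx begin

lemma wc: "weakly_compatible A f" using comp by (simp add: compatible_def)

lemma Dc_ne: assumes c: "c \<in> A - I" shows "det2 (rp a1 - rp a0) (rp c - rp a0) \<noteq> 0"
proof
  assume D: "det2 (rp a1 - rp a0) (rp c - rp a0) = 0"
  have "rp a1 - rp a0 \<noteq> 0" using v01 by simp
  then obtain k where k: "rp c - rp a0 = k *\<^sub>R (rp a1 - rp a0)" using parallel_ex D by blast
  have "rp c = pt k" unfolding pt_def using k by (simp add: algebra_simps)
  then have "hval hd (rp c) = (1-k) * hval hd (rp a0) + k * hval hd (rp a1)" by (simp add: hval_pt)
  also have "\<dots> = 0" using hd(2) seg by simp
  finally have "hval hd (rp c) = 0" .
  moreover have "rp c \<notin> \<delta>" "rp c \<in> Delta A" using c rp_in by (auto simp: I_def)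
  ultimately show False using hd(3) by fastforce
qed

lemma Ori: assumes c: "c \<in> A - I"
  shows "\<exists>\<epsilon>::real. \<epsilon> \<noteq> 0 \<and> (\<forall>a\<in>I. \<forall>b\<in>I. \<sigma> a < \<sigma> b \<longrightarrow> \<epsilon> * det2 (f a - f c) (f b - f c) \<ge> 0)"
proof -
  obtain od ofc :: real where o: "od \<noteq> 0" "ofc \<noteq> 0"
    and T: "\<And>b0 b1 b2. b0\<in>A \<Longrightarrow> b1\<in>A \<Longrightarrow> b2\<in>A \<Longrightarrow> det2 (rp b1 - rp b0) (rp b2 - rp b0) \<noteq> 0 \<Longrightarrow>
       det2 (f b1 - f b0) (f b2 - f b0) \<noteq> 0 \<Longrightarrow>
       sgn (det2 (f b1 - f b0) (f b2 - f b0)) = od * ofc * sgn (det2 (rp b1 - rp b0) (rp b2 - rp b0))"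
    using orient_transfer[OF wc] by metis
  define Dc where "Dc = det2 (rp a1 - rp a0) (rp c - rp a0)"
  have Dc: "Dc \<noteq> 0" using Dc_ne[OF c] by (simp add: Dc_def)
  define \<epsilon> where "\<epsilon> = od * ofc * sgn Dc"
  have "\<epsilon> \<noteq> 0" using o Dc by (simp add: \<epsilon>_def sgn_0_0)
  moreover have "\<epsilon> * det2 (f a - f c) (f b - f c) \<ge> 0" if ab: "a \<in> I" "b \<in> I" "\<sigma> a < \<sigma> b" for a b
  proof -
    have aA: "a \<in> A" and bA: "b \<in> A" and cA: "c \<in> A" using ab c IA by auto
    have eq: "det2 (f a - f c) (f b - f c) = det2 (f b - f a) (f c - f a)"
      using det2_cyc[of "f b" "f a" "f c"] by simp
    have dd: "det2 (rp b - rp a) (rp c - rp a) = (\<sigma> b - \<sigma> a) * Dc"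
      unfolding Dc_def sig(3)[OF ab(1)] sig(3)[OF ab(2)] pt_def
      by (simp add: det2_def algebra_simps)
    show ?thesis
    proof (cases "det2 (f b - f a) (f c - f a) = 0")
      case True then show ?thesis using eq by simp
    next
      case False
      have "det2 (rp b - rp a) (rp c - rp a) \<noteq> 0" using dd Dc ab(3) by simp
      then have s: "sgn (det2 (f b - f a) (f c - f a)) = od * ofc * sgn ((\<sigma> b - \<sigma> a) * Dc)"
        using T[OF aA bA cA _ False] dd by simp
      have "sgn ((\<sigma> b - \<sigma> a) * Dc) = sgn Dc" using ab(3) by (simp add: sgn_mult)
      then have "\<epsilon> = sgn (det2 (f b - f a) (f c - f a))" using s by (simp add: \<epsilon>_def)
      then have "\<epsilon> * det2 (f a - f c) (f b - f c) = \<bar>det2 (f b - f a) (f c - f a)\<bar>"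
        using eq by (simp add: sgn_mult_abs abs_sgn)
      then show ?thesis by simp
    qed
  qed
  ultimately show ?thesis by blast
qed

lemma ND: "\<exists>p\<in>I\<union>(A-I). \<exists>q\<in>I\<union>(A-I). \<exists>r\<in>I\<union>(A-I). det2 (f q - f p) (f r - f p) \<noteq> 0"
proof -
  obtain r0 r1 r2 where "r0 \<in> A" "r1 \<in> A" "r2 \<in> A" "aff_indep3 (f r0) (f r1) (f r2)"
    using wc unfolding weakly_compatible_def by blast
  then show ?thesis by (auto simp: aff_indep3_iff)
qed

lemma Cne: "A - I \<noteq> {}"
proof
  assume "A - I = {}"
  then have "rp ` A \<subseteq> \<delta>" unfolding I_def by auto
  moreover have "convex \<delta>" using edge face_of_imp_convex unfolding is_edge_def by blast
  ultimately have "Delta A \<subseteq> \<delta>" unfolding Delta_def by (rule hull_minimal)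
  then have "aff_dim (Delta A) \<le> aff_dim \<delta>" by (rule aff_dim_subset)
  then show False using dim2 edge by (simp add: is_edge_def)
qed

end


context edge_ctx begin

lemma fne: "f a0 \<noteq> f a1"
  using comp a0A a1A ex0 ex1 a01 unfolding compatible_def by blast

lemma apply_core:
  assumes s1: "(\<Sum>a\<in>I. z a) = 0" and s2: "(\<Sum>a\<in>I. z a *\<^sub>R f a) = 0"
    and H: "\<And>a b. a \<in> I \<Longrightarrow> b \<in> I \<Longrightarrow> z a < 0 \<Longrightarrow> z b \<ge> 0 \<Longrightarrow> \<sigma> a < \<sigma> b"
    and H': "\<And>a b. a \<in> I \<Longrightarrow> b \<in> I \<Longrightarrow> z a \<le> 0 \<Longrightarrow> z b > 0 \<Longrightarrow> \<sigma> a < \<sigma> b"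
    and z0: "z a0 < 0" and z1: "z a1 > 0"
  shows False
proof -
  have first: "\<sigma> a0 < \<sigma> a" if "a \<in> I" "a \<noteq> a0" for a using sig0 sig_first[OF that] by simp
  have last: "\<sigma> a < \<sigma> a1" if "a \<in> I" "a \<noteq> a1" for a using sig1 sig_last[OF that] by simp
  show False
    by (rule core[OF finI s1 s2 H H' a0I z0 a1I z1 first last fne Ori Cne ND])
qed

definition Xf where "Xf t a = w a * bernstein A a (pt t)"
definition Sf where "Sf t = (\<Sum>a\<in>I. Xf t a)"
definition Pt where "Pt t a = (if 0 < t \<and> t < 1 then Xf t a / Sf t
   else if t = 0 then (if a = a0 then 1 else 0) else (if a = a1 then 1 else 0))"

lemma Xpos: assumes "0 < t" "t < 1" "a \<in> I" shows "Xf t a > 0"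
proof -
  have "a \<in> A" using assms(3) IA by blast
  then have "w a > 0" using wpos by blast
  then show ?thesis unfolding Xf_def using bern_int_pos[OF assms(3,1,2)] by simp
qed

lemma Spos: "0 < t \<Longrightarrow> t < 1 \<Longrightarrow> Sf t > 0"
  unfolding Sf_def using finI a0I Xpos by (intro sum_pos) auto

lemma Ppos: "0 < t \<Longrightarrow> t < 1 \<Longrightarrow> a \<in> I \<Longrightarrow> Pt t a > 0"
  using Xpos Spos by (simp add: Pt_def)

lemma Psum: assumes "0 \<le> t" "t \<le> 1" shows "(\<Sum>a\<in>I. Pt t a) = 1"
proof (cases "0 < t \<and> t < 1")
  case True
  then have "(\<Sum>a\<in>I. Pt t a) = (\<Sum>a\<in>I. Xf t a) / Sf t" by (simp add: Pt_def sum_divide_distrib)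
  moreover have "Sf t > 0" using Spos True by blast
  ultimately show ?thesis by (simp add: Sf_def)
next
  case False
  then consider "t = 0" | "t = 1" using assms by linarith
  then show ?thesis using a0I a1I finI by cases (simp_all add: Pt_def)
qed

lemma Pval: assumes "0 \<le> t" "t \<le> 1"
  shows "toric_patch A w f (pt t) = (\<Sum>a\<in>I. Pt t a *\<^sub>R f a)"
proof (cases "0 < t \<and> t < 1")
  case True
  have "toric_patch A w f (pt t) = (1 / Sf t) *\<^sub>R (\<Sum>a\<in>I. Xf t a *\<^sub>R f a)"
    using patch_int True by (simp add: Sf_def Xf_def)
  also have "\<dots> = (\<Sum>a\<in>I. Pt t a *\<^sub>R f a)"
    using True by (simp add: Pt_def scaleR_sum_right)
  finally show ?thesis .
next
  case False
  then consider "t = 0" | "t = 1" using assms by linarith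
  then show ?thesis
  proof cases
    case 1
    have "\<And>a. Pt 0 a *\<^sub>R f a = (if a = a0 then f a else 0)" by (simp add: Pt_def)
    then have "(\<Sum>a\<in>I. Pt 0 a *\<^sub>R f a) = f a0" using a0I finI by simp
    then show ?thesis using F0 1 by simp
  next
    case 2
    have "\<And>a. Pt 1 a *\<^sub>R f a = (if a = a1 then f a else 0)" by (simp add: Pt_def)
    then have "(\<Sum>a\<in>I. Pt 1 a *\<^sub>R f a) = f a1" using a1I finI by simp
    then show ?thesis using F1 2 by simp
  qed
qed

end


context edge_ctx begin

lemma Pnn: "0 \<le> t \<Longrightarrow> t \<le> 1 \<Longrightarrow> a \<in> I \<Longrightarrow> Pt t a \<ge> 0"
  using Ppos[of t a] by (cases "0 < t \<and> t < 1") (auto simp: Pt_def)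

lemma P_lt1:
  assumes "0 < t" "t < 1" "b \<in> I" "c \<in> I" "b \<noteq> c"
  shows "Pt t b < 1"
proof -
  have "Pt t b + Pt t c = (\<Sum>a\<in>{b,c}. Pt t a)" using assms(5) by simp
  also have "\<dots> \<le> (\<Sum>a\<in>I. Pt t a)"
    by (rule sum_mono2[OF finI]) (use assms Pnn in auto)
  also have "\<dots> = 1" using Psum assms by simp
  finally show ?thesis using Ppos[OF assms(1,2,4)] by simp
qed

lemma bern_ratio:
  assumes a: "a \<in> I" and t: "0 < tx" "tx < 1" "0 < ty" "ty < 1"
  shows "bernstein A a (pt ty) = bernstein A a (pt tx) * exp (KK tx ty + \<sigma> a * MM tx ty)"
proof -
  have bx: "bernstein A a (pt tx) > 0" and byy: "bernstein A a (pt ty) > 0"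
    using bern_int_pos a t by auto
  have "bernstein A a (pt ty) = exp (ln (bernstein A a (pt ty)))" using byy by simp
  also have "\<dots> = exp (ln (bernstein A a (pt tx)) + (KK tx ty + \<sigma> a * MM tx ty))"
    using ln_ratio[OF a t] by (simp add: algebra_simps)
  also have "\<dots> = bernstein A a (pt tx) * exp (KK tx ty + \<sigma> a * MM tx ty)"
    using bx by (simp add: exp_add)
  finally show ?thesis .
qed

lemma collision:
  assumes t: "0 \<le> tx" "tx < ty" "ty \<le> 1"
    and eq: "toric_patch A w f (pt tx) = toric_patch A w f (pt ty)"
  shows False
proof -
  define z where "z a = Pt ty a - Pt tx a" for a
  have s1: "(\<Sum>a\<in>I. z a) = 0"
    using Psum[of tx] Psum[of ty] t by (simp add: z_def sum_subtractf)
  have s2: "(\<Sum>a\<in>I. z a *\<^sub>R f a) = 0"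
    using Pval[of tx] Pval[of ty] t eq by (simp add: z_def scaleR_left_diff_distrib sum_subtractf)
  consider (a) "tx = 0" "ty = 1" | (b) "tx = 0" "ty < 1" | (c) "0 < tx" "ty = 1" | (d) "0 < tx" "ty < 1"
    using t by linarith
  then show False
  proof cases
    case a
    then show ?thesis using eq F0 F1 fne by simp
  next
    case b
    have ty0: "0 < ty" using t b by simp
    have zo: "z a > 0" if "a \<in> I" "a \<noteq> a0" for a
      using Ppos[OF ty0 b(2) that(1)] that b by (simp add: z_def Pt_def)
    have za0: "z a0 < 0"
      using P_lt1[OF ty0 b(2) a0I a1I a01] b by (simp add: z_def Pt_def)
    have f0: "\<sigma> a < \<sigma> b" if "a \<in> I" "b \<in> I" "a = a0" "b \<noteq> a0" for a b
      using sig0 sig_first that by simp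
    show False
    proof (rule apply_core[OF s1 s2 _ _ za0 zo[OF a1I a01[symmetric]]])
      fix a b assume ab: "a \<in> I" "b \<in> I" "z a < 0" "z b \<ge> 0"
      then have "a = a0" "b \<noteq> a0" using zo[of a] za0 by (cases "a = a0", auto)+
      then show "\<sigma> a < \<sigma> b" using f0 ab by blast
    next
      fix a b assume ab: "a \<in> I" "b \<in> I" "z a \<le> 0" "z b > 0"
      then have "a = a0" "b \<noteq> a0" using zo[of a] za0 by (cases "a = a0", auto)+
      then show "\<sigma> a < \<sigma> b" using f0 ab by blast
    qed
  next
    case c
    have tx1: "tx < 1" using t c by simp
    have zo: "z a < 0" if "a \<in> I" "a \<noteq> a1" for a
      using Ppos[OF c(1) tx1 that(1)] that c by (simp add: z_def Pt_def)
    have za1: "z a1 > 0"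
      using P_lt1[OF c(1) tx1 a1I a0I a01[symmetric]] c by (simp add: z_def Pt_def)
    have f1: "\<sigma> a < \<sigma> b" if "a \<in> I" "b \<in> I" "a \<noteq> a1" "b = a1" for a b
      using sig1 sig_last that by simp
    show False
    proof (rule apply_core[OF s1 s2 _ _ zo[OF a0I a01] za1])
      fix a b assume ab: "a \<in> I" "b \<in> I" "z a < 0" "z b \<ge> 0"
      then have "a \<noteq> a1" "b = a1" using zo[of b] za1 by (cases "b = a1", auto)+
      then show "\<sigma> a < \<sigma> b" using f1 ab by blast
    next
      fix a b assume ab: "a \<in> I" "b \<in> I" "z a \<le> 0" "z b > 0"
      then have "a \<noteq> a1" "b = a1" using zo[of b] za1 by (cases "b = a1", auto)+
      then show "\<sigma> a < \<sigma> b" using f1 ab by blast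
    qed
  next
    case d
    have tt: "0 < tx" "tx < 1" "0 < ty" "ty < 1" using t d by auto
    define c0 where "c0 = Sf tx / Sf ty"
    have c0: "c0 > 0" unfolding c0_def using Spos tt by simp
    define G where "G s = exp (KK tx ty + s * MM tx ty) * c0 - 1" for s
    have M: "MM tx ty > 0" using MM_pos tt t by simp
    have Gmono: "G s < G s'" if "s < s'" for s s'
    proof -
      have "s * MM tx ty < s' * MM tx ty" using M that by simp
      then have "exp (KK tx ty + s * MM tx ty) < exp (KK tx ty + s' * MM tx ty)" by simp
      then show ?thesis unfolding G_def using c0 by simp
    qed
    have zG: "z a = Pt tx a * G (\<sigma> a)" if a: "a \<in> I" for a
    proof -
      have "Pt ty a = Xf ty a / Sf ty" using tt by (simp add: Pt_def)
      also have "Xf ty a = Xf tx a * exp (KK tx ty + \<sigma> a * MM tx ty)"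
        unfolding Xf_def using bern_ratio[OF a tt] by simp
      also have "Xf tx a = Pt tx a * Sf tx" using tt Spos[of tx] by (simp add: Pt_def)
      finally have "Pt ty a = Pt tx a * (exp (KK tx ty + \<sigma> a * MM tx ty) * c0)"
        by (simp add: c0_def)
      then show ?thesis unfolding z_def G_def by (simp add: algebra_simps)
    qed
    have sgnz: "z a < 0 \<longleftrightarrow> G (\<sigma> a) < 0" "z a > 0 \<longleftrightarrow> G (\<sigma> a) > 0" if a: "a \<in> I" for a
      using zG[OF a] Ppos[OF tt(1,2) a] by (simp_all add: mult_less_0_iff zero_less_mult_iff)
    have HH: "\<sigma> a < \<sigma> b" if "a \<in> I" "b \<in> I" "G (\<sigma> a) < G (\<sigma> b)" for a b
    proof (rule ccontr)
      assume "\<not> \<sigma> a < \<sigma> b"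
      then consider "\<sigma> b < \<sigma> a" | "\<sigma> b = \<sigma> a" by linarith
      then show False
      proof cases
        case 1 then show False using Gmono[OF 1] that(3) by simp
      next
        case 2 then show False using that(3) by simp
      qed
    qed
    have za0: "z a0 < 0"
    proof (rule ccontr)
      assume "\<not> z a0 < 0"
      then have g0: "G 0 \<ge> 0" using sgnz(1)[OF a0I] sig0 by simp
      have pos: "z a > 0" if "a \<in> I" "a \<noteq> a0" for a
        using Gmono[OF sig_first[OF that]] g0 sgnz(2)[OF that(1)] by simp
      have nn: "z a \<ge> 0" if "a \<in> I" for a
        using pos[OF that] \<open>\<not> z a0 < 0\<close> by (cases "a = a0") auto
      have "z a1 \<le> (\<Sum>a\<in>I. z a)" by (rule member_le_sum[OF a1I]) (use nn finI in auto)
      then show False using pos[OF a1I a01[symmetric]] s1 by simp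
    qed
    have za1: "z a1 > 0"
    proof (rule ccontr)
      assume "\<not> z a1 > 0"
      then have g1: "G 1 \<le> 0" using sgnz(2)[OF a1I] sig1 by simp
      have neg: "z a < 0" if "a \<in> I" "a \<noteq> a1" for a
        using Gmono[OF sig_last[OF that]] g1 sgnz(1)[OF that(1)] by simp
      have nn: "- z a \<ge> 0" if "a \<in> I" for a
        using neg[OF that] \<open>\<not> z a1 > 0\<close> by (cases "a = a1") auto
      have "- z a0 \<le> (\<Sum>a\<in>I. - z a)" by (rule member_le_sum[OF a0I]) (use nn finI in auto)
      then show False using neg[OF a0I a01] s1 by (simp add: sum_negf)
    qed
    show False
    proof (rule apply_core[OF s1 s2 _ _ za0 za1])
      fix a b assume ab: "a \<in> I" "b \<in> I" "z a < 0" "z b \<ge> 0"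
      then have "G (\<sigma> a) < 0" "G (\<sigma> b) \<ge> 0" using sgnz by (auto simp: not_less[symmetric])
      then show "\<sigma> a < \<sigma> b" using HH ab by simp
    next
      fix a b assume ab: "a \<in> I" "b \<in> I" "z a \<le> 0" "z b > 0"
      then have "G (\<sigma> a) \<le> 0" "G (\<sigma> b) > 0" using sgnz by (auto simp: not_less[symmetric])
      then show "\<sigma> a < \<sigma> b" using HH ab by simp
    qed
  qed
qed

end

theorem corollary2:
  fixes A :: "(int \<times> int) set" and f :: "int \<times> int \<Rightarrow> real \<times> real"
  assumes "finite A"
    and "aff_dim (Delta A) = 2"
    and "compatible A f"
  shows "\<forall>w. (\<forall>a\<in>A. w a > 0) \<longrightarrow>
           (\<forall>\<delta>. is_edge (Delta A) \<delta> \<longrightarrow> inj_on (toric_patch A w f) \<delta>)"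
proof (intro allI impI)
  fix w :: "int \<times> int \<Rightarrow> real" and \<delta>
  assume wpos: "\<forall>a\<in>A. w a > 0" and ed: "is_edge (Delta A) \<delta>"
  interpret setting A using assms(1,2) by unfold_locales
  obtain p q where pq: "p \<in> A" "q \<in> A" "p \<noteq> q" "\<delta> = closed_segment (rp p) (rp q)"
    "rp p extreme_point_of (Delta A)" "rp q extreme_point_of (Delta A)"
    using edge_seg[OF ed] by metis
  interpret E: edge_ctx A f w \<delta> p q
    using assms(3) wpos ed pq by unfold_locales auto
  show "inj_on (toric_patch A w f) \<delta>"
  proof (rule inj_onI)
    fix x y assume x: "x \<in> \<delta>" and y: "y \<in> \<delta>" and eq: "toric_patch A w f x = toric_patch A w f y"
    obtain tx where tx: "0 \<le> tx" "tx \<le> 1" "x = E.pt tx" using E.in_delta[OF x] by blast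
    obtain ty where ty: "0 \<le> ty" "ty \<le> 1" "y = E.pt ty" using E.in_delta[OF y] by blast
    consider "tx = ty" | "tx < ty" | "ty < tx" by linarith
    then show "x = y"
    proof cases
      case 1 then show ?thesis using tx ty by simp
    next
      case 2 then show ?thesis using E.collision[of tx ty] tx ty eq by simp
    next
      case 3 then show ?thesis using E.collision[of ty tx] tx ty eq by simp
    qed
  qed
qed


end
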